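(* Let $n\geq 8$ and let $x,y\in V(K_n)$ be distinct. Then in the Waiter-Client game on $K_n$, within $n$ rounds Waiter can force Client to build a red Hamilton path between $x$ and $y$.
   Context: Waiter-Client game on $K_n$: in each round Waiter offers two free edges of $K_n$, Client colors one of them red and the other becomes blue. *)

theory Defs
  imports Main
begin

definition Kn_edges :: "nat \<Rightarrow> nat set set" where
  "Kn_edges n = {{u, v} | u v. u < n \<and> v < n \<and> u \<noteq> v}"

definition free_edges :: "nat \<Rightarrow> nat set set \<Rightarrow> nat set set \<Rightarrow> nat set set" where
  "free_edges n R B = Kn_edges n - (R \<union> B)"

text \<open>In each round Waiter offers two distinct free edges;
  Client colours one red and the other becomes blue.\<close>
fun waiter_forces :: "nat \<Rightarrow> (nat set set \<Rightarrow> bool) \<Rightarrow> nat \<Rightarrow> nat set set \<Rightarrow> nat set set \<Rightarrow> bool" where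
  "waiter_forces n P 0 R B = P R"
| "waiter_forces n P (Suc k) R B =
     (P R \<or> (\<exists>e1 e2. e1 \<noteq> e2 \<and> e1 \<in> free_edges n R B \<and> e2 \<in> free_edges n R B \<and>
        waiter_forces n P k (insert e1 R) (insert e2 B) \<and>
        waiter_forces n P k (insert e2 R) (insert e1 B)))"

definition ham_path_between :: "nat \<Rightarrow> nat set set \<Rightarrow> nat \<Rightarrow> nat \<Rightarrow> bool" where
  "ham_path_between n R x y \<longleftrightarrow>
     (\<exists>vs. distinct vs \<and> set vs = {0..<n} \<and> hd vs = x \<and> last vs = y \<and>
        (\<forall>i. Suc i < length vs \<longrightarrow> {vs ! i, vs ! Suc i} \<in> R))"

end

theory Submission
  imports Defs
begin

datatype strat = Win "nat list" | Offer "nat \<times> nat" "nat \<times> nat" strat strat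

fun ok :: "(nat\<times>nat) list \<Rightarrow> (nat\<times>nat) list \<Rightarrow> nat \<Rightarrow> strat \<Rightarrow> bool" where
  "ok Rl Bl k (Win p) = (sort p = [0..<8] \<and> hd p = 0 \<and> last p = 7 \<and>
      successively (\<lambda>a b. (min a b, max a b) \<in> set Rl) p)"
| "ok Rl Bl 0 (Offer e1 e2 t1 t2) = False"
| "ok Rl Bl (Suc k) (Offer e1 e2 t1 t2) = (e1 \<noteq> e2 \<and> fst e1 < snd e1 \<and> snd e1 < 8 \<and>
      fst e2 < snd e2 \<and> snd e2 < 8 \<and> e1 \<notin> set Rl \<and> e1 \<notin> set Bl \<and> e2 \<notin> set Rl \<and>
      e2 \<notin> set Bl \<and> ok (e1 # Rl) (e2 # Bl) k t1 \<and> ok (e2 # Rl) (e1 # Bl) k t2)"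

lemma wf_of_P:
  assumes "P R" shows "waiter_forces n P k R B"
  using assms by (cases k) auto

lemma inj_pair:
  assumes "distinct L" "i < j" "j < length L" "a < b" "b < length L"
    "{L!i, L!j} = {L!a, L!b}"
  shows "i = a \<and> j = b"
proof -
  have "L!i \<noteq> L!j" using assms by (simp add: nth_eq_iff_index_eq)
  from assms(6) have "(L!i = L!a \<and> L!j = L!b) \<or> (L!i = L!b \<and> L!j = L!a)"
    by (auto simp: doubleton_eq_iff)
  thus ?thesis using assms by (auto simp: nth_eq_iff_index_eq)
qed

lemma free_step:
  assumes free: "\<forall>i j. i < j \<longrightarrow> j < 8 \<longrightarrow> (i,j) \<notin> set Rl \<longrightarrow> (i,j) \<notin> set Bl \<longrightarrow> {L!i, L!j} \<notin> R \<union> B"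
    and L: "distinct L" "length L = 8"
    and ab: "a < b" "b < 8" and cd: "c < d" "d < 8"
  shows "\<forall>i j. i < j \<longrightarrow> j < 8 \<longrightarrow> (i,j) \<notin> set ((a,b) # Rl) \<longrightarrow> (i,j) \<notin> set ((c,d) # Bl) \<longrightarrow>
      {L!i, L!j} \<notin> insert {L!a, L!b} R \<union> insert {L!c, L!d} B"
proof (intro allI impI)
  fix i j assume h: "i < j" "j < 8" "(i,j) \<notin> set ((a,b) # Rl)" "(i,j) \<notin> set ((c,d) # Bl)"
  have "{L!i, L!j} \<noteq> {L!a, L!b}" using inj_pair[of L i j a b] h ab L by auto
  moreover have "{L!i, L!j} \<noteq> {L!c, L!d}" using inj_pair[of L i j c d] h cd L by auto
  moreover have "{L!i, L!j} \<notin> R \<union> B" using free h by auto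
  ultimately show "{L!i, L!j} \<notin> insert {L!a, L!b} R \<union> insert {L!c, L!d} B" by auto
qed

lemma edge_free:
  assumes free: "\<forall>i j. i < j \<longrightarrow> j < 8 \<longrightarrow> (i,j) \<notin> set Rl \<longrightarrow> (i,j) \<notin> set Bl \<longrightarrow> {L!i, L!j} \<notin> R \<union> B"
    and L: "distinct L" "length L = 8" "set L \<subseteq> {0..<n}"
    and ab: "a < b" "b < 8" "(a,b) \<notin> set Rl" "(a,b) \<notin> set Bl"
  shows "{L!a, L!b} \<in> free_edges n R B"
proof -
  have "L!a \<noteq> L!b" using ab L by (simp add: nth_eq_iff_index_eq)
  moreover have "L!a \<in> set L" "L!b \<in> set L" using ab L by auto
  hence "L!a < n" "L!b < n" using L(3) by auto
  ultimately have "{L!a, L!b} \<in> Kn_edges n" unfolding Kn_edges_def by blast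
  thus ?thesis using free ab unfolding free_edges_def by auto
qed

lemma ham_of_succ:
  assumes "distinct vs" "set vs = {0..<n}" "hd vs = x" "last vs = y"
    "successively (\<lambda>a b. {a,b} \<in> R) vs"
  shows "ham_path_between n R x y"
  unfolding ham_path_between_def
  using assms successively_nth[OF assms(5)] by blast

lemma ok_sound:
  assumes "ok Rl Bl k t"
  and L: "distinct L" "length L = 8" "set L \<subseteq> {0..<n}"
  and ps: "distinct ps" "ps \<noteq> []" "hd ps = x" "last ps = L ! 0" "set ps \<inter> set L = {L ! 0}"
     "set ps \<union> set L = {0..<n}" "successively (\<lambda>a b. {a,b} \<in> R) ps"
  and red: "\<forall>e \<in> set Rl. {L ! fst e, L ! snd e} \<in> R"
  and free: "\<forall>i j. i < j \<longrightarrow> j < 8 \<longrightarrow> (i,j) \<notin> set Rl \<longrightarrow> (i,j) \<notin> set Bl \<longrightarrow> {L!i, L!j} \<notin> R \<union> B"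
  and y: "y = L ! 7"
  shows "waiter_forces n (\<lambda>R. ham_path_between n R x y) k R B"
  using assms(1) ps(7) red free
proof (induction t arbitrary: Rl Bl k R B)
  case (Win p)
  from Win.prems(1) have sp: "sort p = [0..<8]" and hp: "hd p = 0" and lp: "last p = 7"
    and sc: "successively (\<lambda>a b. (min a b, max a b) \<in> set Rl) p" by auto
  have setp: "set p = {0..<8}" using sp by (metis set_sort set_upt)
  have dp: "distinct p" using sp by (metis distinct_sort distinct_upt)
  have lenp: "length p = 8" using sp by (metis length_sort length_upt minus_nat.diff_0)
  define q where "q = map ((!) L) p"
  have pne: "p \<noteq> []" using lenp by auto
  have dq: "distinct q" unfolding q_def using dp setp L
    by (auto simp: distinct_map inj_on_def nth_eq_iff_index_eq)
  have setq: "set q = set L" unfolding q_def using setp L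
    by (simp add: nth_image)
  have hq: "hd q = L ! 0" unfolding q_def using hp pne by (simp add: hd_map)
  have lq: "last q = y" unfolding q_def using lp pne y by (simp add: last_map)
  have lenq: "length q = 8" unfolding q_def using lenp by simp
  have scq: "successively (\<lambda>a b. {a,b} \<in> R) q"
    unfolding q_def successively_map
  proof (rule successively_mono[OF sc])
    fix a b assume "(min a b, max a b) \<in> set Rl"
    hence "{L ! min a b, L ! max a b} \<in> R" using Win.prems(3) by fastforce
    thus "{L ! a, L ! b} \<in> R" by (cases "a \<le> b") (auto simp: min_def max_def insert_commute)
  qed
  define vs where "vs = ps @ tl q"
  have q_split: "q = L ! 0 # tl q" using hq lenq by (cases q) auto
  have ltq: "length (tl q) = 7" using lenq by simp
  have tlq: "tl q \<noteq> []" using lenq by (cases q) auto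
  have n0: "L ! 0 \<notin> set (tl q)" using dq q_split by (metis distinct.simps(2))
  have stq: "set q = insert (L ! 0) (set (tl q))" using q_split by (metis list.simps(15))
  have l0: "L ! 0 \<in> set ps" using ps(2,4) by (metis last_in_set)
  have disj: "set ps \<inter> set (tl q) = {}"
  proof (rule ccontr)
    assume "set ps \<inter> set (tl q) \<noteq> {}"
    then obtain z where "z \<in> set ps" "z \<in> set (tl q)" by blast
    moreover have "z \<in> set L" using \<open>z \<in> set (tl q)\<close> setq stq by blast
    ultimately have "z = L ! 0" using ps(5) by blast
    thus False using n0 \<open>z \<in> set (tl q)\<close> by simp
  qed
  have dvs: "distinct vs" unfolding vs_def using ps(1) dq disj
    by (simp add: distinct_tl)
  have e1: "set L = insert (L ! 0) (set (tl q))" using setq stq by simp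
  have "set ps \<union> set (tl q) = set ps \<union> set L" unfolding e1 using l0 by auto
  hence svs: "set vs = {0..<n}" unfolding vs_def using ps(6) by simp
  have hvs: "hd vs = x" unfolding vs_def using ps by simp
  have lvs: "last vs = y" unfolding vs_def using tlq lq q_split
    by (metis last_ConsR last_appendR)
  have sctq: "successively (\<lambda>a b. {a,b} \<in> R) (L ! 0 # tl q)" using scq q_split by simp
  have sc2: "successively (\<lambda>a b. {a,b} \<in> R) (tl q)" using sctq
    by (cases "tl q") auto
  have sc3: "{L ! 0, hd (tl q)} \<in> R" using sctq tlq by (cases "tl q") auto
  have scvs: "successively (\<lambda>a b. {a,b} \<in> R) vs" unfolding vs_def
    using Win.prems(2) sc2 sc3 ps(4) by (simp add: successively_append_iff)
  show ?case by (rule wf_of_P, rule ham_of_succ[OF dvs svs hvs lvs scvs])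
next
  case (Offer e1 e2 t1 t2)
  obtain a b where e1: "e1 = (a,b)" by (cases e1)
  obtain c d where e2: "e2 = (c,d)" by (cases e2)
  obtain k' where k: "k = Suc k'" using Offer.prems(1) by (cases k) auto
  from Offer.prems(1) have ab: "a < b" "b < 8" "(a,b) \<notin> set Rl" "(a,b) \<notin> set Bl"
    and cd: "c < d" "d < 8" "(c,d) \<notin> set Rl" "(c,d) \<notin> set Bl"
    and ne: "(a,b) \<noteq> (c,d)"
    and ok1: "ok ((a,b) # Rl) ((c,d) # Bl) k' t1" and ok2: "ok ((c,d) # Rl) ((a,b) # Bl) k' t2"
    unfolding e1 e2 k by auto
  define g1 where "g1 = {L!a, L!b}"
  define g2 where "g2 = {L!c, L!d}"
  have gne: "g1 \<noteq> g2" unfolding g1_def g2_def using inj_pair[of L a b c d] ab cd ne L by auto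
  have f1: "g1 \<in> free_edges n R B" unfolding g1_def using edge_free[OF Offer.prems(4) L ab] .
  have f2: "g2 \<in> free_edges n R B" unfolding g2_def using edge_free[OF Offer.prems(4) L cd] .
  have w1: "waiter_forces n (\<lambda>R. ham_path_between n R x y) k' (insert g1 R) (insert g2 B)"
  proof (rule Offer.IH(1)[OF ok1])
    show "successively (\<lambda>a b. {a, b} \<in> insert g1 R) ps"
      using Offer.prems(2) by (rule successively_mono) auto
    show "\<forall>e\<in>set ((a, b) # Rl). {L ! fst e, L ! snd e} \<in> insert g1 R"
      using Offer.prems(3) unfolding g1_def by auto
    show "\<forall>i j. i < j \<longrightarrow> j < 8 \<longrightarrow> (i, j) \<notin> set ((a, b) # Rl) \<longrightarrow> (i, j) \<notin> set ((c, d) # Bl) \<longrightarrow>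
      {L ! i, L ! j} \<notin> insert g1 R \<union> insert g2 B"
      unfolding g1_def g2_def using free_step[OF Offer.prems(4) L(1,2) ab(1,2) cd(1,2)] .
  qed
  have w2: "waiter_forces n (\<lambda>R. ham_path_between n R x y) k' (insert g2 R) (insert g1 B)"
  proof (rule Offer.IH(2)[OF ok2])
    show "successively (\<lambda>a b. {a, b} \<in> insert g2 R) ps"
      using Offer.prems(2) by (rule successively_mono) auto
    show "\<forall>e\<in>set ((c, d) # Rl). {L ! fst e, L ! snd e} \<in> insert g2 R"
      using Offer.prems(3) unfolding g2_def by auto
    show "\<forall>i j. i < j \<longrightarrow> j < 8 \<longrightarrow> (i, j) \<notin> set ((c, d) # Rl) \<longrightarrow> (i, j) \<notin> set ((a, b) # Bl) \<longrightarrow>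
      {L ! i, L ! j} \<notin> insert g2 R \<union> insert g1 B"
      unfolding g1_def g2_def using free_step[OF Offer.prems(4) L(1,2) cd(1,2) ab(1,2)] .
  qed
  show ?case unfolding k using gne f1 f2 w1 w2 by auto
qed

definition the_tree :: strat where "the_tree = (Offer (0,1) (0,2) (Offer (1,2) (1,3) (Offer (1,4) (1,5) (Offer (3,5) (3,6) (Offer (5,6) (6,7) (Offer (2,7) (4,7) (Offer (3,4) (4,6) (Offer (0,6) (2,6) (Win [0,6,5,3,4,1,2,7]) (Win [0,1,4,3,5,6,2,7])) (Offer (0,3) (2,3) (Win [0,3,5,6,4,1,2,7]) (Win [0,1,4,6,5,3,2,7]))) (Offer (2,3) (2,6) (Offer (0,6) (4,6) (Win [0,6,5,3,2,1,4,7]) (Win [0,1,2,3,5,6,4,7])) (Offer (0,3) (3,4) (Win [0,3,5,6,2,1,4,7]) (Win [0,1,2,6,5,3,4,7])))) (Offer (2,6) (4,6) (Offer (3,4) (4,5) (Offer (0,5) (2,5) (Win [0,5,3,4,1,2,6,7]) (Win [0,1,4,3,5,2,6,7])) (Offer (0,3) (2,3) (Win [0,3,5,4,1,2,6,7]) (Win [0,1,4,5,3,2,6,7]))) (Offer (2,3) (2,5) (Offer (0,5) (4,5) (Win [0,5,3,2,1,4,6,7]) (Win [0,1,2,3,5,4,6,7])) (Offer (0,3) (3,4) (Win [0,3,5,2,1,4,6,7]) (Win [0,1,2,5,3,4,6,7]))))) (Offer (5,6) (5,7) (Offer (2,7) (4,7) (Offer (4,5) (3,4) (Offer (0,3) (2,3)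 (Win [0,3,6,5,4,1,2,7]) (Win [0,1,4,5,6,3,2,7])) (Offer (0,5) (2,5) (Win [0,5,6,3,4,1,2,7]) (Win [0,1,4,3,6,5,2,7]))) (Offer (2,3) (2,5) (Offer (0,5) (4,5) (Win [0,5,6,3,2,1,4,7]) (Win [0,1,2,3,6,5,4,7])) (Offer (0,3) (3,4) (Win [0,3,6,5,2,1,4,7]) (Win [0,1,2,5,6,3,4,7])))) (Offer (2,5) (4,5) (Offer (3,4) (4,6) (Offer (0,6) (2,6) (Win [0,6,3,4,1,2,5,7]) (Win [0,1,4,3,6,2,5,7])) (Offer (0,3) (2,3) (Win [0,3,6,4,1,2,5,7]) (Win [0,1,4,6,3,2,5,7]))) (Offer (2,3) (2,6) (Offer (0,6) (4,6) (Win [0,6,3,2,1,4,5,7]) (Win [0,1,2,3,6,4,5,7])) (Offer (0,3) (3,4) (Win [0,3,6,2,1,4,5,7]) (Win [0,1,2,6,3,4,5,7])))))) (Offer (3,4) (3,6) (Offer (4,6) (6,7) (Offer (2,7) (5,7) (Offer (3,5) (5,6) (Offer (0,6) (2,6) (Win [0,6,4,3,5,1,2,7]) (Win [0,1,5,3,4,6,2,7])) (Offer (0,3) (2,3) (Win [0,3,4,6,5,1,2,7]) (Win [0,1,5,6,4,3,2,7]))) (Offer (2,3) (2,6) (Offer (0,6) (5,6) (Win [0,6,4,3,2,1,5,7]) (Win [0,1,2,3,4,6,5,7])) (Offer (0,3) (3,5) (Win [0,3,4,6,2,1,5,7]) (Win [0,1,2,6,4,3,5,7])))) (Offer (2,6)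 (5,6) (Offer (3,5) (4,5) (Offer (0,4) (2,4) (Win [0,4,3,5,1,2,6,7]) (Win [0,1,5,3,4,2,6,7])) (Offer (0,3) (2,3) (Win [0,3,4,5,1,2,6,7]) (Win [0,1,5,4,3,2,6,7]))) (Offer (2,3) (2,4) (Offer (0,4) (4,5) (Win [0,4,3,2,1,5,6,7]) (Win [0,1,2,3,4,5,6,7])) (Offer (0,3) (3,5) (Win [0,3,4,2,1,5,6,7]) (Win [0,1,2,4,3,5,6,7]))))) (Offer (4,6) (4,7) (Offer (2,7) (5,7) (Offer (4,5) (3,5) (Offer (0,3) (2,3) (Win [0,3,6,4,5,1,2,7]) (Win [0,1,5,4,6,3,2,7])) (Offer (0,4) (2,4) (Win [0,4,6,3,5,1,2,7]) (Win [0,1,5,3,6,4,2,7]))) (Offer (2,3) (2,4) (Offer (0,4) (4,5) (Win [0,4,6,3,2,1,5,7]) (Win [0,1,2,3,6,4,5,7])) (Offer (0,3) (3,5) (Win [0,3,6,4,2,1,5,7]) (Win [0,1,2,4,6,3,5,7])))) (Offer (2,4) (4,5) (Offer (3,5) (5,6) (Offer (0,6) (2,6) (Win [0,6,3,5,1,2,4,7]) (Win [0,1,5,3,6,2,4,7])) (Offer (0,3) (2,3) (Win [0,3,6,5,1,2,4,7]) (Win [0,1,5,6,3,2,4,7]))) (Offer (2,3) (2,6) (Offer (0,6) (5,6) (Win [0,6,3,2,1,5,4,7]) (Win [0,1,2,3,6,5,4,7])) (Offer (0,3) (3,5) (Win [0,3,6,2,1,5,4,7]) (Win [0,1,2,6,3,5,4,7])))))))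 (Offer (2,4) (2,5) (Offer (1,5) (4,5) (Offer (2,6) (4,6) (Offer (3,4) (4,7) (Offer (5,6) (6,7) (Offer (5,7) (3,7) (Win [0,1,3,4,2,6,5,7]) (Win [0,1,5,6,2,4,3,7])) (Offer (0,5) (3,5) (Win [0,5,1,3,4,2,6,7]) (Win [0,1,5,3,4,2,6,7]))) (Offer (3,6) (5,6) (Offer (0,5) (3,5) (Win [0,5,1,3,6,2,4,7]) (Win [0,1,5,3,6,2,4,7])) (Offer (0,3) (3,5) (Win [0,3,1,5,6,2,4,7]) (Win [0,1,3,5,6,2,4,7])))) (Offer (2,3) (2,7) (Offer (5,6) (6,7) (Offer (5,7) (3,7) (Win [0,1,3,2,4,6,5,7]) (Win [0,1,5,6,4,2,3,7])) (Offer (0,5) (3,5) (Win [0,5,1,3,2,4,6,7]) (Win [0,1,5,3,2,4,6,7]))) (Offer (5,6) (3,6) (Offer (0,3) (3,5) (Win [0,3,1,5,6,4,2,7]) (Win [0,1,3,5,6,4,2,7])) (Offer (0,5) (3,5) (Win [0,5,1,3,6,4,2,7]) (Win [0,1,5,3,6,4,2,7]))))) (Offer (2,3) (3,5) (Offer (5,6) (5,7) (Offer (0,6) (1,6) (Offer (6,7) (1,7) (Win [0,1,3,2,4,5,6,7]) (Win [0,6,5,4,2,3,1,7])) (Offer (3,7) (6,7) (Win [0,1,6,5,4,2,3,7]) (Win [0,1,3,2,4,5,6,7]))) (Offer (1,6) (2,6) (Offer (0,6) (3,6) (Win [0,6,1,3,2,4,5,7]) (Win [0,1,6,3,2,4,5,7]))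 (Offer (3,6) (4,6) (Win [0,1,3,6,2,4,5,7]) (Win [0,1,3,2,6,4,5,7])))) (Offer (2,6) (2,7) (Offer (0,6) (1,6) (Offer (1,7) (6,7) (Win [0,6,2,4,5,3,1,7]) (Win [0,1,3,5,4,2,6,7])) (Offer (3,7) (6,7) (Win [0,1,6,2,4,5,3,7]) (Win [0,1,3,5,4,2,6,7]))) (Offer (1,6) (5,6) (Offer (0,6) (3,6) (Win [0,6,1,3,5,4,2,7]) (Win [0,1,6,3,5,4,2,7])) (Offer (3,6) (4,6) (Win [0,1,3,6,5,4,2,7]) (Win [0,1,3,5,6,4,2,7])))))) (Offer (1,4) (4,5) (Offer (2,6) (5,6) (Offer (3,5) (5,7) (Offer (4,6) (6,7) (Offer (4,7) (3,7) (Win [0,1,3,5,2,6,4,7]) (Win [0,1,4,6,2,5,3,7])) (Offer (0,4) (3,4) (Win [0,4,1,3,5,2,6,7]) (Win [0,1,4,3,5,2,6,7]))) (Offer (3,6) (4,6) (Offer (0,4) (3,4) (Win [0,4,1,3,6,2,5,7]) (Win [0,1,4,3,6,2,5,7])) (Offer (0,3) (3,4) (Win [0,3,1,4,6,2,5,7]) (Win [0,1,3,4,6,2,5,7])))) (Offer (2,3) (2,7) (Offer (4,6) (6,7) (Offer (4,7) (3,7) (Win [0,1,3,2,5,6,4,7]) (Win [0,1,4,6,5,2,3,7])) (Offer (0,4) (3,4) (Win [0,4,1,3,2,5,6,7]) (Win [0,1,4,3,2,5,6,7]))) (Offer (4,6) (3,6) (Offer (0,3) (3,4) (Win [0,3,1,4,6,5,2,7])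 (Win [0,1,3,4,6,5,2,7])) (Offer (0,4) (3,4) (Win [0,4,1,3,6,5,2,7]) (Win [0,1,4,3,6,5,2,7]))))) (Offer (2,3) (3,4) (Offer (4,6) (4,7) (Offer (0,6) (1,6) (Offer (6,7) (1,7) (Win [0,1,3,2,5,4,6,7]) (Win [0,6,4,5,2,3,1,7])) (Offer (3,7) (6,7) (Win [0,1,6,4,5,2,3,7]) (Win [0,1,3,2,5,4,6,7]))) (Offer (1,6) (2,6) (Offer (0,6) (3,6) (Win [0,6,1,3,2,5,4,7]) (Win [0,1,6,3,2,5,4,7])) (Offer (3,6) (5,6) (Win [0,1,3,6,2,5,4,7]) (Win [0,1,3,2,6,5,4,7])))) (Offer (2,6) (2,7) (Offer (0,6) (1,6) (Offer (1,7) (6,7) (Win [0,6,2,5,4,3,1,7]) (Win [0,1,3,4,5,2,6,7])) (Offer (3,7) (6,7) (Win [0,1,6,2,5,4,3,7]) (Win [0,1,3,4,5,2,6,7]))) (Offer (1,6) (4,6) (Offer (0,6) (3,6) (Win [0,6,1,3,4,5,2,7]) (Win [0,1,6,3,4,5,2,7])) (Offer (3,6) (5,6) (Win [0,1,3,6,4,5,2,7]) (Win [0,1,3,4,6,5,2,7])))))))) (Offer (1,2) (2,3) (Offer (2,4) (2,5) (Offer (3,5) (3,6) (Offer (5,6) (6,7) (Offer (1,7) (4,7) (Offer (3,4) (4,6) (Offer (0,6) (1,6) (Win [0,6,5,3,4,2,1,7]) (Win [0,2,4,3,5,6,1,7])) (Offer (0,3) (1,3) (Win [0,3,5,6,4,2,1,7])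 (Win [0,2,4,6,5,3,1,7]))) (Offer (1,3) (1,6) (Offer (0,6) (4,6) (Win [0,6,5,3,1,2,4,7]) (Win [0,2,1,3,5,6,4,7])) (Offer (0,3) (3,4) (Win [0,3,5,6,1,2,4,7]) (Win [0,2,1,6,5,3,4,7])))) (Offer (1,6) (4,6) (Offer (3,4) (4,5) (Offer (0,5) (1,5) (Win [0,5,3,4,2,1,6,7]) (Win [0,2,4,3,5,1,6,7])) (Offer (0,3) (1,3) (Win [0,3,5,4,2,1,6,7]) (Win [0,2,4,5,3,1,6,7]))) (Offer (1,3) (1,5) (Offer (0,5) (4,5) (Win [0,5,3,1,2,4,6,7]) (Win [0,2,1,3,5,4,6,7])) (Offer (0,3) (3,4) (Win [0,3,5,1,2,4,6,7]) (Win [0,2,1,5,3,4,6,7]))))) (Offer (5,6) (5,7) (Offer (1,7) (4,7) (Offer (4,5) (3,4) (Offer (0,3) (1,3) (Win [0,3,6,5,4,2,1,7]) (Win [0,2,4,5,6,3,1,7])) (Offer (0,5) (1,5) (Win [0,5,6,3,4,2,1,7]) (Win [0,2,4,3,6,5,1,7]))) (Offer (1,3) (1,5) (Offer (0,5) (4,5) (Win [0,5,6,3,1,2,4,7]) (Win [0,2,1,3,6,5,4,7])) (Offer (0,3) (3,4) (Win [0,3,6,5,1,2,4,7]) (Win [0,2,1,5,6,3,4,7])))) (Offer (1,5) (4,5) (Offer (3,4) (4,6) (Offer (0,6) (1,6) (Win [0,6,3,4,2,1,5,7]) (Win [0,2,4,3,6,1,5,7])) (Offer (0,3) (1,3) (Win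 [0,3,6,4,2,1,5,7]) (Win [0,2,4,6,3,1,5,7]))) (Offer (1,3) (1,6) (Offer (0,6) (4,6) (Win [0,6,3,1,2,4,5,7]) (Win [0,2,1,3,6,4,5,7])) (Offer (0,3) (3,4) (Win [0,3,6,1,2,4,5,7]) (Win [0,2,1,6,3,4,5,7])))))) (Offer (3,4) (3,6) (Offer (4,6) (6,7) (Offer (1,7) (5,7) (Offer (3,5) (5,6) (Offer (0,6) (1,6) (Win [0,6,4,3,5,2,1,7]) (Win [0,2,5,3,4,6,1,7])) (Offer (0,3) (1,3) (Win [0,3,4,6,5,2,1,7]) (Win [0,2,5,6,4,3,1,7]))) (Offer (1,3) (1,6) (Offer (0,6) (5,6) (Win [0,6,4,3,1,2,5,7]) (Win [0,2,1,3,4,6,5,7])) (Offer (0,3) (3,5) (Win [0,3,4,6,1,2,5,7]) (Win [0,2,1,6,4,3,5,7])))) (Offer (1,6) (5,6) (Offer (3,5) (4,5) (Offer (0,4) (1,4) (Win [0,4,3,5,2,1,6,7]) (Win [0,2,5,3,4,1,6,7])) (Offer (0,3) (1,3) (Win [0,3,4,5,2,1,6,7]) (Win [0,2,5,4,3,1,6,7]))) (Offer (1,3) (1,4) (Offer (0,4) (4,5) (Win [0,4,3,1,2,5,6,7]) (Win [0,2,1,3,4,5,6,7])) (Offer (0,3) (3,5) (Win [0,3,4,1,2,5,6,7]) (Win [0,2,1,4,3,5,6,7]))))) (Offer (4,6) (4,7) (Offer (1,7) (5,7) (Offer (4,5) (3,5) (Offer (0,3) (1,3) (Win [0,3,6,4,5,2,1,7])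 (Win [0,2,5,4,6,3,1,7])) (Offer (0,4) (1,4) (Win [0,4,6,3,5,2,1,7]) (Win [0,2,5,3,6,4,1,7]))) (Offer (1,3) (1,4) (Offer (0,4) (4,5) (Win [0,4,6,3,1,2,5,7]) (Win [0,2,1,3,6,4,5,7])) (Offer (0,3) (3,5) (Win [0,3,6,4,1,2,5,7]) (Win [0,2,1,4,6,3,5,7])))) (Offer (1,4) (4,5) (Offer (3,5) (5,6) (Offer (0,6) (1,6) (Win [0,6,3,5,2,1,4,7]) (Win [0,2,5,3,6,1,4,7])) (Offer (0,3) (1,3) (Win [0,3,6,5,2,1,4,7]) (Win [0,2,5,6,3,1,4,7]))) (Offer (1,3) (1,6) (Offer (0,6) (5,6) (Win [0,6,3,1,2,5,4,7]) (Win [0,2,1,3,6,5,4,7])) (Offer (0,3) (3,5) (Win [0,3,6,1,2,5,4,7]) (Win [0,2,1,6,3,5,4,7]))))))) (Offer (1,4) (1,5) (Offer (2,5) (4,5) (Offer (1,6) (4,6) (Offer (3,4) (4,7) (Offer (5,6) (6,7) (Offer (5,7) (3,7) (Win [0,2,3,4,1,6,5,7]) (Win [0,2,5,6,1,4,3,7])) (Offer (0,5) (3,5) (Win [0,5,2,3,4,1,6,7]) (Win [0,2,5,3,4,1,6,7]))) (Offer (3,6) (5,6) (Offer (0,5) (3,5) (Win [0,5,2,3,6,1,4,7]) (Win [0,2,5,3,6,1,4,7])) (Offer (0,3) (3,5) (Win [0,3,2,5,6,1,4,7]) (Win [0,2,3,5,6,1,4,7])))) (Offer (1,3) (1,7)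 (Offer (5,6) (6,7) (Offer (5,7) (3,7) (Win [0,2,3,1,4,6,5,7]) (Win [0,2,5,6,4,1,3,7])) (Offer (0,5) (3,5) (Win [0,5,2,3,1,4,6,7]) (Win [0,2,5,3,1,4,6,7]))) (Offer (5,6) (3,6) (Offer (0,3) (3,5) (Win [0,3,2,5,6,4,1,7]) (Win [0,2,3,5,6,4,1,7])) (Offer (0,5) (3,5) (Win [0,5,2,3,6,4,1,7]) (Win [0,2,5,3,6,4,1,7]))))) (Offer (1,3) (3,5) (Offer (5,6) (5,7) (Offer (0,6) (2,6) (Offer (6,7) (2,7) (Win [0,2,3,1,4,5,6,7]) (Win [0,6,5,4,1,3,2,7])) (Offer (3,7) (6,7) (Win [0,2,6,5,4,1,3,7]) (Win [0,2,3,1,4,5,6,7]))) (Offer (2,6) (1,6) (Offer (0,6) (3,6) (Win [0,6,2,3,1,4,5,7]) (Win [0,2,6,3,1,4,5,7])) (Offer (3,6) (4,6) (Win [0,2,3,6,1,4,5,7]) (Win [0,2,3,1,6,4,5,7])))) (Offer (1,6) (1,7) (Offer (0,6) (2,6) (Offer (2,7) (6,7) (Win [0,6,1,4,5,3,2,7]) (Win [0,2,3,5,4,1,6,7])) (Offer (3,7) (6,7) (Win [0,2,6,1,4,5,3,7]) (Win [0,2,3,5,4,1,6,7]))) (Offer (2,6) (5,6) (Offer (0,6) (3,6) (Win [0,6,2,3,5,4,1,7]) (Win [0,2,6,3,5,4,1,7])) (Offer (3,6) (4,6) (Win [0,2,3,6,5,4,1,7]) (Win [0,2,3,5,6,4,1,7]))))))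 (Offer (2,4) (4,5) (Offer (1,6) (5,6) (Offer (3,5) (5,7) (Offer (4,6) (6,7) (Offer (4,7) (3,7) (Win [0,2,3,5,1,6,4,7]) (Win [0,2,4,6,1,5,3,7])) (Offer (0,4) (3,4) (Win [0,4,2,3,5,1,6,7]) (Win [0,2,4,3,5,1,6,7]))) (Offer (3,6) (4,6) (Offer (0,4) (3,4) (Win [0,4,2,3,6,1,5,7]) (Win [0,2,4,3,6,1,5,7])) (Offer (0,3) (3,4) (Win [0,3,2,4,6,1,5,7]) (Win [0,2,3,4,6,1,5,7])))) (Offer (1,3) (1,7) (Offer (4,6) (6,7) (Offer (4,7) (3,7) (Win [0,2,3,1,5,6,4,7]) (Win [0,2,4,6,5,1,3,7])) (Offer (0,4) (3,4) (Win [0,4,2,3,1,5,6,7]) (Win [0,2,4,3,1,5,6,7]))) (Offer (4,6) (3,6) (Offer (0,3) (3,4) (Win [0,3,2,4,6,5,1,7]) (Win [0,2,3,4,6,5,1,7])) (Offer (0,4) (3,4) (Win [0,4,2,3,6,5,1,7]) (Win [0,2,4,3,6,5,1,7]))))) (Offer (1,3) (3,4) (Offer (4,6) (4,7) (Offer (0,6) (2,6) (Offer (6,7) (2,7) (Win [0,2,3,1,5,4,6,7]) (Win [0,6,4,5,1,3,2,7])) (Offer (3,7) (6,7) (Win [0,2,6,4,5,1,3,7]) (Win [0,2,3,1,5,4,6,7]))) (Offer (2,6) (1,6) (Offer (0,6) (3,6) (Win [0,6,2,3,1,5,4,7]) (Win [0,2,6,3,1,5,4,7])) (Offer (3,6)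 (5,6) (Win [0,2,3,6,1,5,4,7]) (Win [0,2,3,1,6,5,4,7])))) (Offer (1,6) (1,7) (Offer (0,6) (2,6) (Offer (2,7) (6,7) (Win [0,6,1,5,4,3,2,7]) (Win [0,2,3,4,5,1,6,7])) (Offer (3,7) (6,7) (Win [0,2,6,1,5,4,3,7]) (Win [0,2,3,4,5,1,6,7]))) (Offer (2,6) (4,6) (Offer (0,6) (3,6) (Win [0,6,2,3,4,5,1,7]) (Win [0,2,6,3,4,5,1,7])) (Offer (3,6) (5,6) (Win [0,2,3,6,4,5,1,7]) (Win [0,2,3,4,6,5,1,7])))))))))"

lemma tree_ok: "ok [] [] 8 the_tree"
  unfolding the_tree_def by code_simp

lemma base_case:
  assumes W: "finite W" "card W = 6"
   and ps: "distinct ps" "ps \<noteq> []" "hd ps = x" "last ps = v" "set ps \<inter> insert y W = {}"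
     "set ps \<union> insert y W = {0..<n}" "y \<notin> W"
   and pe: "successively (\<lambda>a b. {a,b} \<in> R) ps"
   and clean: "\<forall>a\<in>insert v (insert y W). \<forall>b\<in>insert v (insert y W). a \<noteq> b \<longrightarrow> {a,b} \<notin> R \<union> B"
  shows "waiter_forces n (\<lambda>R. ham_path_between n R x y) 8 R B"
proof -
  define L where "L = v # sorted_list_of_set W @ [y]"
  have vin: "v \<in> set ps" using ps(2,4) by (metis last_in_set)
  have vW: "v \<notin> W" "v \<noteq> y" using vin ps(5) by auto
  have setL: "set L = insert v (insert y W)" unfolding L_def using W by auto
  have lenL: "length L = 8" unfolding L_def using W by simp
  have dL: "distinct L" unfolding L_def using W vW ps(7) by auto
  have L0: "L ! 0 = v" unfolding L_def by simp
  have L7: "L ! 7 = y" unfolding L_def using W by (simp add: nth_append)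
  have Ln: "set L \<subseteq> {0..<n}" using setL ps(6) vin by auto
  have i1: "set ps \<inter> set L = {L ! 0}" using setL L0 ps(5) vin by auto
  have i2: "set ps \<union> set L = {0..<n}" using setL ps(6) vin by auto
  have free: "\<forall>i j. i < j \<longrightarrow> j < 8 \<longrightarrow> (i,j) \<notin> set [] \<longrightarrow> (i,j) \<notin> set [] \<longrightarrow> {L!i, L!j} \<notin> R \<union> B"
  proof (intro allI impI)
    fix i j :: nat assume h: "i < j" "j < 8"
    have "L ! i \<in> set L" "L ! j \<in> set L" using h lenL by auto
    moreover have "L ! i \<noteq> L ! j" using h lenL dL by (simp add: nth_eq_iff_index_eq)
    ultimately show "{L!i, L!j} \<notin> R \<union> B" using clean setL by auto
  qed
  show ?thesis
    by (rule ok_sound[OF tree_ok dL lenL Ln ps(1,2,3) _ i1 i2 pe _ free])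
       (auto simp: L0 L7 ps(4))
qed

lemma greedy:
  assumes "finite W" "card W = m" "m \<ge> 6"
   and "distinct ps" "ps \<noteq> []" "hd ps = x" "last ps = v" "set ps \<inter> insert y W = {}"
     "set ps \<union> insert y W = {0..<n}" "y \<notin> W"
   and "successively (\<lambda>a b. {a,b} \<in> R) ps"
   and "\<forall>a\<in>insert v (insert y W). \<forall>b\<in>insert v (insert y W). a \<noteq> b \<longrightarrow> {a,b} \<notin> R \<union> B"
  shows "waiter_forces n (\<lambda>R. ham_path_between n R x y) (m + 2) R B"
  using assms
proof (induction m arbitrary: W ps v R B)
  case 0
  hence False by simp
  thus ?case ..
next
  case (Suc m)
  show ?case
  proof (cases "m = 5")
    case True
    hence e8: "Suc m + 2 = 8" by simp
    have "waiter_forces n (\<lambda>R. ham_path_between n R x y) 8 R B"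
      by (rule base_case[of W ps x v y n R B]) (use Suc.prems True in auto)
    thus ?thesis by (simp only: e8)
  next
    case False
    hence m6: "m \<ge> 6" using Suc.prems(3) by simp
    have step: "waiter_forces n (\<lambda>R. ham_path_between n R x y) (m + 2) (insert {v,a} R) (insert {v,b} B)"
      if ab: "a \<in> W" "b \<in> W" "a \<noteq> b" for a b
    proof (rule Suc.IH[of "W - {a}" "ps @ [a]"])
      show "finite (W - {a})" using Suc.prems(1) by simp
      show "card (W - {a}) = m" using Suc.prems(1,2) ab by simp
      show "6 \<le> m" by (rule m6)
      show "distinct (ps @ [a])" using Suc.prems(4,8) ab by auto
      show "ps @ [a] \<noteq> []" by simp
      show "hd (ps @ [a]) = x" using Suc.prems(5,6) by simp
      show "last (ps @ [a]) = a" by simp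
      show "set (ps @ [a]) \<inter> insert y (W - {a}) = {}" using Suc.prems(8,10) ab by auto
      show "set (ps @ [a]) \<union> insert y (W - {a}) = {0..<n}" using Suc.prems(9) ab by auto
      show "y \<notin> W - {a}" using Suc.prems(10) by simp
      show "successively (\<lambda>aa b. {aa, b} \<in> insert {v, a} R) (ps @ [a])"
      proof -
        have "successively (\<lambda>aa b. {aa, b} \<in> insert {v, a} R) ps"
          using Suc.prems(11) by (rule successively_mono) auto
        thus ?thesis using Suc.prems(5,7) by (simp add: successively_append_iff)
      qed
      have vin: "v \<in> set ps" using Suc.prems(5,7) by (metis last_in_set)
      hence vout: "v \<notin> insert y W" using Suc.prems(8) by auto
      show "\<forall>aa\<in>insert a (insert y (W - {a})). \<forall>ba\<in>insert a (insert y (W - {a})). aa \<noteq> ba \<longrightarrow>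
          {aa, ba} \<notin> insert {v, a} R \<union> insert {v, b} B"
      proof (intro ballI impI)
        fix aa ba assume h: "aa \<in> insert a (insert y (W - {a}))" "ba \<in> insert a (insert y (W - {a}))" "aa \<noteq> ba"
        hence "aa \<in> insert y W" "ba \<in> insert y W" using ab by auto
        hence "{aa, ba} \<noteq> {v, a}" "{aa, ba} \<noteq> {v, b}" using vout by (auto simp: doubleton_eq_iff)
        moreover have "{aa, ba} \<notin> R \<union> B" using Suc.prems(12) h ab by auto
        ultimately show "{aa, ba} \<notin> insert {v, a} R \<union> insert {v, b} B" by auto
      qed
    qed
    have "card W \<ge> 2" using Suc.prems(2) m6 by simp
    hence "W \<noteq> {}" by auto
    then obtain a where a: "a \<in> W" by blast
    have "card (W - {a}) \<ge> 1" using \<open>card W \<ge> 2\<close> a Suc.prems(1) by simp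
    hence "W - {a} \<noteq> {}" by (metis card.empty not_one_le_zero)
    then obtain b where b: "b \<in> W - {a}" by blast
    have ab: "a \<in> W" "b \<in> W" "a \<noteq> b" using a b by auto
    have vin: "v \<in> set ps" using Suc.prems(5,7) by (metis last_in_set)
    hence vout: "v \<notin> insert y W" using Suc.prems(8) by auto
    have fa: "{v,a} \<in> free_edges n R B" "{v,b} \<in> free_edges n R B"
    proof -
      have "v < n" "a < n" "b < n" using vin ab Suc.prems(9) by auto
      moreover have "v \<noteq> a" "v \<noteq> b" using vout ab by auto
      ultimately have "{v,a} \<in> Kn_edges n" "{v,b} \<in> Kn_edges n" unfolding Kn_edges_def by blast+
      moreover have "{v,a} \<notin> R \<union> B" "{v,b} \<notin> R \<union> B" using Suc.prems(12) ab \<open>v \<noteq> a\<close> \<open>v \<noteq> b\<close> by auto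
      ultimately show "{v,a} \<in> free_edges n R B" "{v,b} \<in> free_edges n R B" unfolding free_edges_def by auto
    qed
    have ne: "{v,a} \<noteq> {v,b}" using ab by (auto simp: doubleton_eq_iff)
    have e: "Suc m + 2 = Suc (m + 2)" by simp
    have w1: "waiter_forces n (\<lambda>R. ham_path_between n R x y) (m + 2) (insert {v,a} R) (insert {v,b} B)"
      using step ab by blast
    have w2: "waiter_forces n (\<lambda>R. ham_path_between n R x y) (m + 2) (insert {v,b} R) (insert {v,a} B)"
      using step ab by blast
    show ?thesis unfolding e waiter_forces.simps(2)
      apply (rule disjI2)
      apply (rule exI[of _ "{v,a}"], rule exI[of _ "{v,b}"])
      by (intro conjI ne fa w1 w2)
  qed
qed

theorem lemma3p2:
  fixes n x y :: nat
  assumes "n \<ge> 8" and "x < n" and "y < n" and "x \<noteq> y"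
  shows "waiter_forces n (\<lambda>R. ham_path_between n R x y) n {} {}"
proof -
  define W where "W = {0..<n} - {x, y}"
  have cW: "card W = n - 2" unfolding W_def using assms by (simp add: card_Diff_subset)
  have "waiter_forces n (\<lambda>R. ham_path_between n R x y) ((n - 2) + 2) {} {}"
  proof (rule greedy[of W "n - 2" "[x]" x x y n])
    show "finite W" unfolding W_def by simp
    show "card W = n - 2" by (rule cW)
    show "6 \<le> n - 2" using assms by simp
    show "distinct [x]" by simp
    show "[x] \<noteq> []" by simp
    show "hd [x] = x" by simp
    show "last [x] = x" by simp
    show "set [x] \<inter> insert y W = {}" unfolding W_def using assms by auto
    show "set [x] \<union> insert y W = {0..<n}" unfolding W_def using assms by auto
    show "y \<notin> W" unfolding W_def by simp
    show "successively (\<lambda>a b. {a, b} \<in> {}) [x]" by simp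
    show "\<forall>a\<in>insert x (insert y W). \<forall>b\<in>insert x (insert y W). a \<noteq> b \<longrightarrow> {a, b} \<notin> {} \<union> {}" by simp
  qed
  moreover have eq: "n - 2 + 2 = n" using assms by simp
  ultimately show ?thesis by metis
qed

end
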